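(* Let $h,v$ be permutations of $\Lambda=\{1,\dots,d\}$ such that $\langle h,v\rangle$ acts transitively on $\Lambda$, let $M\ge0$ be an integer, and let $(\sigma_n)_{n\in\mathbb{Z}}$ be a Sturmian sequence in $\Sigma=\{L,R\}$. Then every sequence $(\mu_n,\sigma_n)_{n\in\mathbb{Z}}\in(\Lambda\times\Sigma)^{\mathbb{Z}}$ satisfying $\mu_{n+1}=\sigma_n\cdot\mu_n$ for all $n$ contains every element of $\Lambda\times\Sigma$.
   Context: Here $L\cdot\lambda=vh^M(\lambda)$ and $R\cdot\lambda=vh^{M+1}(\lambda)$. A Sturmian sequence is a biinfinite sequence over two letters that is not eventually periodic and has exactly $n+1$ distinct subwords of each length $n$. *)

theory Defs
  imports "HOL-Combinatorics.Permutations"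
begin

datatype letter = L | R

inductive_set gen_perms :: "('a \<Rightarrow> 'a) \<Rightarrow> ('a \<Rightarrow> 'a) \<Rightarrow> ('a \<Rightarrow> 'a) set"
  for h v where
  gen_id: "id \<in> gen_perms h v"
| gen_h: "g \<in> gen_perms h v \<Longrightarrow> h \<circ> g \<in> gen_perms h v"
| gen_v: "g \<in> gen_perms h v \<Longrightarrow> v \<circ> g \<in> gen_perms h v"
| gen_hi: "g \<in> gen_perms h v \<Longrightarrow> inv h \<circ> g \<in> gen_perms h v"
| gen_vi: "g \<in> gen_perms h v \<Longrightarrow> inv v \<circ> g \<in> gen_perms h v"

definition transitive_on :: "'a set \<Rightarrow> ('a \<Rightarrow> 'a) \<Rightarrow> ('a \<Rightarrow> 'a) \<Rightarrow> bool" where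
  "transitive_on A h v \<longleftrightarrow> (\<forall>a\<in>A. \<forall>b\<in>A. \<exists>g\<in>gen_perms h v. g a = b)"

fun act :: "('a \<Rightarrow> 'a) \<Rightarrow> ('a \<Rightarrow> 'a) \<Rightarrow> nat \<Rightarrow> letter \<Rightarrow> 'a \<Rightarrow> 'a" where
  "act h v M L x = v ((h ^^ M) x)"
| "act h v M R x = v ((h ^^ (Suc M)) x)"

definition subwords :: "(int \<Rightarrow> 'b) \<Rightarrow> nat \<Rightarrow> 'b list set" where
  "subwords s n = {map (\<lambda>i. s (k + int i)) [0..<n] | k. True}"

definition eventually_periodic :: "(int \<Rightarrow> 'b) \<Rightarrow> bool" where
  "eventually_periodic s \<longleftrightarrow>
     (\<exists>p::int. p > 0 \<and> (\<exists>N. \<forall>n\<ge>N. s (n + p) = s n))"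

definition sturmian :: "(int \<Rightarrow> letter) \<Rightarrow> bool" where
  "sturmian s \<longleftrightarrow> \<not> eventually_periodic s \<and>
     (\<forall>n. finite (subwords s n) \<and> card (subwords s n) = n + 1)"

end

theory Submission
  imports Defs
begin


definition win :: "(int \<Rightarrow> 'b) \<Rightarrow> int \<Rightarrow> nat \<Rightarrow> 'b list" where
  "win s k n = map (\<lambda>i. s (k + int i)) [0..<n]"

lemma win_length[simp]: "length (win s k n) = n"
  by (simp add: win_def)

lemma win_0[simp]: "win s k 0 = []"
  by (simp add: win_def)

lemma win_snoc: "win s k (Suc n) = win s k n @ [s (k + int n)]"
  by (simp add: win_def)

lemma win_Cons: "win s k (Suc n) = s k # win s (k+1) n"
  unfolding win_def
proof (induction n)
  case 0 then show ?case by simp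
next
  case (Suc n) then show ?case by (simp add: algebra_simps)
qed

lemma win_add: "win s k (m + n) = win s k m @ win s (k + int m) n"
  by (induction n) (auto simp: win_snoc algebra_simps)

lemma win_nth: "i < n \<Longrightarrow> win s k n ! i = s (k + int i)"
  by (simp add: win_def)

lemma win_eq_iff: "win s k n = win s k' n \<longleftrightarrow> (\<forall>i<n. s (k + int i) = s (k' + int i))"
  by (auto simp: list_eq_iff_nth_eq win_nth)

lemma subwords_win: "subwords s n = {win s k n | k. True}"
  by (simp add: subwords_def win_def)

lemma tl_win: "tl (win s k (Suc n)) = win s (k+1) n"
  by (simp add: win_Cons)

lemma butlast_win: "butlast (win s k (Suc n)) = win s k n"
  by (simp add: win_snoc)

lemma last_win: "last (win s k (Suc n)) = s (k + int n)"
  by (simp add: win_snoc)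


lemma letter_neq: "(a::letter) \<noteq> b \<Longrightarrow> (a = L \<and> b = R) \<or> (a = R \<and> b = L)"
  by (cases a; cases b) auto

locale ctx =
  fixes d M :: nat and h v :: "nat \<Rightarrow> nat" and \<mu> :: "int \<Rightarrow> nat" and \<sigma> :: "int \<Rightarrow> letter"
  assumes hp: "h permutes {1..d}" and vp: "v permutes {1..d}"
    and tr: "transitive_on {1..d} h v"
    and st: "sturmian \<sigma>"
    and mu_in: "\<forall>n. \<mu> n \<in> {1..d}"
    and mu_step: "\<forall>n. \<mu> (n + 1) = act h v M (\<sigma> n) (\<mu> n)"
begin

abbreviation F where "F n \<equiv> subwords \<sigma> n"

definition RS :: "letter list \<Rightarrow> bool" where
  "RS w \<longleftrightarrow> w @ [L] \<in> F (Suc (length w)) \<and> w @ [R] \<in> F (Suc (length w))"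

lemma F_finite: "finite (F n)" and F_card: "card (F n) = n + 1"
  using st by (auto simp: sturmian_def)

lemma not_ep: "\<not> eventually_periodic \<sigma>"
  using st by (auto simp: sturmian_def)

lemma win_in_F[simp]: "win \<sigma> k n \<in> F n"
  by (auto simp: subwords_win)

lemma F_E: "w \<in> F n \<Longrightarrow> (\<And>k. w = win \<sigma> k n \<Longrightarrow> P) \<Longrightarrow> P"
  by (auto simp: subwords_win)

lemma F_length: "w \<in> F n \<Longrightarrow> length w = n"
  by (auto elim: F_E)

lemma F_tl: "w \<in> F (Suc n) \<Longrightarrow> tl w \<in> F n"
  by (auto elim!: F_E simp: tl_win)

lemma F_butlast: "w \<in> F (Suc n) \<Longrightarrow> butlast w \<in> F n"
  by (auto elim!: F_E simp: butlast_win)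

lemma F_ext_right: "w \<in> F n \<Longrightarrow> \<exists>a. w @ [a] \<in> F (Suc n)"
  by (elim F_E) (metis win_in_F win_snoc)

lemma F_ext_left: "w \<in> F n \<Longrightarrow> \<exists>a. a # w \<in> F (Suc n)"
proof (elim F_E)
  fix k assume "w = win \<sigma> k n"
  hence "\<sigma> (k-1) # w = win \<sigma> (k-1) (Suc n)" by (simp add: win_Cons)
  thus ?thesis by (metis win_in_F)
qed

lemma RS_in_F: "RS w \<Longrightarrow> w \<in> F (length w)"
  unfolding RS_def by (metis F_butlast butlast_snoc)

lemma RS_card: "card {w \<in> F n. RS w} = 1"
proof -
  define B where "B c = {w \<in> F n. w @ [c] \<in> F (Suc n)}" for c
  have fin: "finite (B c)" for c unfolding B_def using F_finite by auto
  have U: "F (Suc n) = (\<lambda>w. w @ [L]) ` B L \<union> (\<lambda>w. w @ [R]) ` B R"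
  proof
    show "F (Suc n) \<subseteq> (\<lambda>w. w @ [L]) ` B L \<union> (\<lambda>w. w @ [R]) ` B R"
    proof
      fix y assume y: "y \<in> F (Suc n)"
      hence ne: "y \<noteq> []" using F_length by fastforce
      hence yy: "y = butlast y @ [last y]" by simp
      have "butlast y \<in> F n" using y F_butlast by blast
      with y yy show "y \<in> (\<lambda>w. w @ [L]) ` B L \<union> (\<lambda>w. w @ [R]) ` B R"
        unfolding B_def by (cases "last y") (metis (mono_tags, lifting) UnI1 UnI2 image_eqI mem_Collect_eq)+
    qed
  qed (auto simp: B_def)
  have D: "(\<lambda>w. w @ [L]) ` B L \<inter> (\<lambda>w. w @ [R]) ` B R = {}" by auto
  have c1: "card (F (Suc n)) = card (B L) + card (B R)"
    unfolding U by (subst card_Un_disjoint) (auto simp: fin D card_image inj_on_def)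
  have BU: "B L \<union> B R = F n"
    unfolding B_def using F_ext_right by (auto, metis letter.exhaust)
  have BI: "B L \<inter> B R = {w \<in> F n. RS w}"
    unfolding B_def RS_def using F_length by auto
  have "card (B L) + card (B R) = card (B L \<union> B R) + card (B L \<inter> B R)"
    using card_Un_Int fin by blast
  thus ?thesis using c1 BU BI F_card by simp
qed

lemma RS_unique: "RS w \<Longrightarrow> RS w' \<Longrightarrow> length w = length w' \<Longrightarrow> w = w'"
proof -
  assume a: "RS w" "RS w'" "length w = length w'"
  let ?S = "{x \<in> F (length w). RS x}"
  have "w \<in> ?S" "w' \<in> ?S" using a RS_in_F by (auto, metis)
  moreover have "card ?S = 1" by (rule RS_card)
  ultimately show ?thesis by (metis card_1_singletonE singletonD)
qed

lemma RS_exists: "\<exists>w. length w = n \<and> RS w"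
proof -
  have "card {w \<in> F n. RS w} = 1" by (rule RS_card)
  then obtain w where "w \<in> {w \<in> F n. RS w}" by (metis card_1_singletonE singletonI)
  thus ?thesis using F_length by auto
qed

lemma RS_tl: "RS (c # w) \<Longrightarrow> RS w"
  unfolding RS_def by (metis F_tl append_Cons length_Cons list.sel(3))

lemma RS_suffix: "RS (x @ w) \<Longrightarrow> RS w"
  by (induction x) (auto dest: RS_tl)

end


context ctx begin

definition TF :: "int \<Rightarrow> nat \<Rightarrow> letter list set" where
  "TF P n = {win \<sigma> (P + int j) n | j. True}"

lemma TF_sub: "TF P n \<subseteq> F n"
  by (auto simp: TF_def)

lemma TF_finite: "finite (TF P n)"
  using TF_sub F_finite finite_subset by blast

lemma TF_0: "TF P 0 = {[]}"
  by (auto simp: TF_def)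

lemma TF_butlast: "butlast ` TF P (Suc m) = TF P m"
  by (auto simp: TF_def butlast_win image_iff) (metis butlast_win)

lemma TF_mono: "card (TF P m) \<le> card (TF P (Suc m))"
  by (metis TF_butlast TF_finite card_image_le)

lemma periodic_contra:
  assumes "p > 0" and "\<forall>x::nat. \<sigma> (N + int x + p) = \<sigma> (N + int x)"
  shows False
proof -
  have "eventually_periodic \<sigma>"
    unfolding eventually_periodic_def
  proof (intro exI conjI allI impI)
    show "p > 0" by fact
    fix n assume "n \<ge> N"
    then obtain x where "n = N + int x" by (metis le_add_diff_inverse nonneg_int_cases add_le_cancel_left diff_ge_0_iff_ge)
    thus "\<sigma> (n + p) = \<sigma> n" using assms by simp
  qed
  thus False using not_ep by simp
qed

lemma TF_full: "TF P n = F n"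
proof (rule ccontr)
  assume ne: "TF P n \<noteq> F n"
  hence "TF P n \<subset> F n" using TF_sub by auto
  hence lt: "card (TF P n) < n + 1" using F_card F_finite psubset_card_mono by metis
  have "\<exists>m<n. card (TF P (Suc m)) = card (TF P m)"
  proof (rule ccontr)
    assume "\<not> ?thesis"
    hence inc: "\<forall>m<n. card (TF P m) < card (TF P (Suc m))" using TF_mono le_neq_implies_less by metis
    have "m \<le> n \<Longrightarrow> card (TF P m) \<ge> m + 1" for m
    proof (induction m)
      case 0 then show ?case by (simp add: TF_0)
    next
      case (Suc m) then show ?case using inc by (metis Suc_eq_plus1 Suc_le_eq Suc_le_lessD le_less_trans less_imp_le_nat)
    qed
    thus False using lt by (metis le_refl not_le)
  qed
  then obtain m where m: "card (TF P (Suc m)) = card (TF P m)" by blast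
  have inj: "inj_on butlast (TF P (Suc m))"
    by (rule eq_card_imp_inj_on) (auto simp: TF_finite TF_butlast m)
  define c where "c = card (TF P m)"
  define g where "g j = win \<sigma> (P + int j) m" for j
  have "\<not> inj_on g {..c}"
  proof
    assume "inj_on g {..c}"
    moreover have "g ` {..c} \<subseteq> TF P m" by (auto simp: g_def TF_def)
    ultimately have "card {..c} \<le> card (TF P m)" using card_inj_on_le TF_finite by blast
    thus False by (simp add: c_def)
  qed
  then obtain a b where ab: "a < b" "g a = g b"
    unfolding inj_on_def by (metis linorder_neqE_nat)
  have key: "win \<sigma> (P + int a + int x) m = win \<sigma> (P + int b + int x) m \<and> \<sigma> (P + int a + int x) = \<sigma> (P + int b + int x)" for x
  proof (induction x)
    case 0
    have "win \<sigma> (P + int a) (Suc m) \<in> TF P (Suc m)" "win \<sigma> (P + int b) (Suc m) \<in> TF P (Suc m)"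
      by (auto simp: TF_def)
    moreover have "butlast (win \<sigma> (P + int a) (Suc m)) = butlast (win \<sigma> (P + int b) (Suc m))"
      using ab by (simp add: butlast_win g_def)
    ultimately have "win \<sigma> (P + int a) (Suc m) = win \<sigma> (P + int b) (Suc m)" by (metis inj inj_onD)
    then show ?case using ab by (simp add: g_def win_Cons)
  next
    case (Suc x)
    have e: "win \<sigma> (P + int a + int x) (Suc m) = win \<sigma> (P + int b + int x) (Suc m)"
    proof -
      have "win \<sigma> (P + int a + int x) (Suc m) \<in> TF P (Suc m)" "win \<sigma> (P + int b + int x) (Suc m) \<in> TF P (Suc m)"
        unfolding TF_def by (metis (mono_tags, lifting) add.assoc mem_Collect_eq of_nat_add)+
      moreover have "butlast (win \<sigma> (P + int a + int x) (Suc m)) = butlast (win \<sigma> (P + int b + int x) (Suc m))"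
        using Suc by (simp add: butlast_win)
      ultimately show ?thesis by (metis inj inj_onD)
    qed
    have t1: "win \<sigma> (P + int a + int (Suc x)) m = tl (win \<sigma> (P + int a + int x) (Suc m))"
      by (simp add: tl_win algebra_simps)
    have t2: "win \<sigma> (P + int b + int (Suc x)) m = tl (win \<sigma> (P + int b + int x) (Suc m))"
      by (simp add: tl_win algebra_simps)
    have w1: "win \<sigma> (P + int a + int (Suc x)) m = win \<sigma> (P + int b + int (Suc x)) m"
      using t1 t2 e by simp
    have e2: "win \<sigma> (P + int a + int (Suc x)) (Suc m) = win \<sigma> (P + int b + int (Suc x)) (Suc m)"
    proof -
      have "win \<sigma> (P + int a + int (Suc x)) (Suc m) \<in> TF P (Suc m)" "win \<sigma> (P + int b + int (Suc x)) (Suc m) \<in> TF P (Suc m)"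
        unfolding TF_def by (metis (mono_tags, lifting) add.assoc mem_Collect_eq of_nat_add)+
      moreover have "butlast (win \<sigma> (P + int a + int (Suc x)) (Suc m)) = butlast (win \<sigma> (P + int b + int (Suc x)) (Suc m))"
        using w1 by (simp add: butlast_win)
      ultimately show ?thesis by (metis inj inj_onD)
    qed
    show ?case using w1 e2 by (simp add: win_Cons)
  qed
  have "\<forall>x::nat. \<sigma> ((P + int a) + int x + int (b - a)) = \<sigma> ((P + int a) + int x)"
  proof
    fix x
    have "(P + int a) + int x + int (b - a) = P + int b + int x" using ab by simp
    hence "\<sigma> ((P + int a) + int x + int (b - a)) = \<sigma> (P + int b + int x)" by (rule arg_cong)
    thus "\<sigma> ((P + int a) + int x + int (b - a)) = \<sigma> ((P + int a) + int x)" using key[of x] by (simp only:)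
  qed
  moreover have "int (b - a) > 0" using ab by simp
  ultimately show False using periodic_contra by blast
qed

lemma recur: "w \<in> F n \<Longrightarrow> \<exists>j. win \<sigma> (P + int j) n = w"
proof -
  assume "w \<in> F n"
  hence "w \<in> TF P n" using TF_full by simp
  thus ?thesis unfolding TF_def by blast
qed

lemma GW: "\<exists>n\<ge>n1. RS (win \<sigma> p n)"
proof (rule ccontr)
  assume "\<not> ?thesis"
  hence nr: "\<forall>n\<ge>n1. \<not> RS (win \<sigma> p n)" by auto
  obtain j where j: "win \<sigma> (p + 1 + int j) n1 = win \<sigma> p n1" using recur win_in_F by blast
  define p' where "p' = p + 1 + int j"
  have eq: "win \<sigma> p' (n1 + x) = win \<sigma> p (n1 + x)" for x
  proof (induction x)
    case 0 then show ?case using j p'_def by simp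
  next
    case (Suc x)
    let ?w = "win \<sigma> p (n1 + x)"
    have a1: "?w @ [\<sigma> (p + int (n1 + x))] \<in> F (Suc (n1 + x))" by (metis win_in_F win_snoc)
    have a2: "?w @ [\<sigma> (p' + int (n1 + x))] \<in> F (Suc (n1 + x))" by (metis win_in_F win_snoc Suc)
    have "\<sigma> (p' + int (n1 + x)) = \<sigma> (p + int (n1 + x))"
    proof (rule ccontr)
      assume "\<not> ?thesis"
      hence "RS ?w" using a1 a2 letter_neq[of "\<sigma> (p' + int (n1 + x))" "\<sigma> (p + int (n1 + x))"] unfolding RS_def win_length by auto
      thus False using nr by simp
    qed
    thus ?case using Suc by (simp add: win_snoc)
  qed
  have "\<forall>x::nat. \<sigma> (p + int x + (p' - p)) = \<sigma> (p + int x)"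
  proof
    fix x
    have "win \<sigma> p' (n1 + Suc x) ! x = win \<sigma> p (n1 + Suc x) ! x" using eq[of "Suc x"] by simp
    thus "\<sigma> (p + int x + (p' - p)) = \<sigma> (p + int x)" by (simp add: win_nth algebra_simps)
  qed
  moreover have "p' - p > 0" by (simp add: p'_def)
  ultimately show False using periodic_contra by blast
qed

end


context ctx begin

abbreviation f where "f a \<equiv> act h v M a"

lemma inj_h: "inj h" using hp permutes_inj by blast
lemma inj_v: "inj v" using vp permutes_inj by blast

lemma f_inj: "inj (f a)"
proof (cases a)
  case L
  have "inj (v \<circ> (h ^^ M))" using inj_v inj_fn[OF inj_h] by (rule inj_compose)
  moreover have "f L = v \<circ> (h ^^ M)" by (rule ext) simp
  ultimately show ?thesis using L by simp
next
  case R
  have "inj (v \<circ> (h ^^ Suc M))" using inj_v inj_fn[OF inj_h] by (rule inj_compose)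
  moreover have "f R = v \<circ> (h ^^ Suc M)" by (rule ext) (simp del: funpow.simps)
  ultimately show ?thesis using R by simp
qed

lemma f_img_eq: "f a ` A = f a ` B \<Longrightarrow> A = B"
  using f_inj by (simp add: inj_image_eq_iff)

definition End :: "letter list \<Rightarrow> nat set" where
  "End w = {\<mu> (i + int (length w)) | i. win \<sigma> i (length w) = w}"

lemma End_sub: "End w \<subseteq> {1..d}"
  using mu_in by (auto simp: End_def)

lemma End_finite: "finite (End w)"
  using End_sub finite_subset by blast

lemma End_ne: "End (win \<sigma> a n) \<noteq> {}"
  by (auto simp: End_def)

lemma End_suffix: "End (x @ w) \<subseteq> End w"
proof
  fix y assume "y \<in> End (x @ w)"
  then obtain i where i: "win \<sigma> i (length x + length w) = x @ w" "y = \<mu> (i + int (length x + length w))"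
    by (auto simp: End_def)
  have "win \<sigma> (i + int (length x)) (length w) = w" using i(1) by (simp add: win_add)
  moreover have "y = \<mu> ((i + int (length x)) + int (length w))" using i(2) by (simp add: algebra_simps)
  ultimately show "y \<in> End w" by (auto simp: End_def)
qed

definition Mid :: "letter list \<Rightarrow> letter \<Rightarrow> nat set" where
  "Mid w a = {\<mu> (i + int (length w)) | i. win \<sigma> i (Suc (length w)) = w @ [a]}"

lemma Mid_sub: "Mid w a \<subseteq> End w"
  by (auto simp: Mid_def End_def win_snoc)

lemma Mid_sub': "Mid w a \<subseteq> {1..d}"
  using mu_in by (auto simp: Mid_def)

lemma End_snoc: "End (w @ [a]) = f a ` Mid w a"
proof -
  have "win \<sigma> i (Suc (length w)) = w @ [a] \<Longrightarrow> \<mu> (i + int (length w) + 1) = f a (\<mu> (i + int (length w)))" for i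
    using mu_step by (simp add: win_snoc)
  hence "End (w @ [a]) = {f a (\<mu> (i + int (length w))) | i. win \<sigma> i (Suc (length w)) = w @ [a]}"
    unfolding End_def by (auto simp: algebra_simps) (metis add.commute add.left_commute)+
  thus ?thesis unfolding Mid_def by auto
qed

lemma End_snoc_card: "card (End (w @ [a])) \<le> card (End w)"
proof -
  have "card (End (w @ [a])) = card (Mid w a)"
    unfolding End_snoc by (rule card_image) (meson f_inj inj_on_subset subset_UNIV)
  also have "\<dots> \<le> card (End w)" using Mid_sub End_finite card_mono by blast
  finally show ?thesis .
qed

lemma End_snoc_eq: "card (End (w @ [a])) = card (End w) \<Longrightarrow> End (w @ [a]) = f a ` End w"
proof -
  assume c: "card (End (w @ [a])) = card (End w)"
  have "card (End (w @ [a])) = card (Mid w a)"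
    unfolding End_snoc by (rule card_image) (meson f_inj inj_on_subset subset_UNIV)
  hence "Mid w a = End w" using c Mid_sub End_finite by (metis card_subset_eq)
  thus ?thesis using End_snoc by simp
qed

definition k :: nat where "k = (LEAST c. \<exists>a n. card (End (win \<sigma> a n)) = c)"

lemma k_ex: "\<exists>a n. card (End (win \<sigma> a n)) = k"
  unfolding k_def by (rule LeastI_ex) blast

lemma k_le: "k \<le> card (End (win \<sigma> a n))"
  unfolding k_def by (rule Least_le) blast

lemma k_pos: "k \<ge> 1"
  using k_ex End_ne End_finite by (metis card_0_eq less_one not_le)

definition mini :: "int \<Rightarrow> nat \<Rightarrow> bool" where
  "mini a n \<longleftrightarrow> card (End (win \<sigma> a n)) = k"

lemma mini_right1: "mini a n \<Longrightarrow> mini a (Suc n)"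
  unfolding mini_def using End_snoc_card[of "win \<sigma> a n" "\<sigma> (a + int n)"] k_le[of a "Suc n"]
  by (simp add: win_snoc)

lemma mini_left1: "mini a n \<Longrightarrow> mini (a - 1) (Suc n)"
proof -
  assume m: "mini a n"
  have "win \<sigma> (a - 1) (Suc n) = [\<sigma> (a - 1)] @ win \<sigma> a n" by (simp add: win_Cons)
  hence "End (win \<sigma> (a - 1) (Suc n)) \<subseteq> End (win \<sigma> a n)" using End_suffix by metis
  hence "card (End (win \<sigma> (a - 1) (Suc n))) \<le> card (End (win \<sigma> a n))" using End_finite card_mono by blast
  thus ?thesis using m k_le[of "a - 1" "Suc n"] unfolding mini_def by simp
qed

lemma mini_right: "mini a n \<Longrightarrow> mini a (n + j)"
  by (induction j) (auto intro: mini_right1)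

lemma mini_left: "mini a n \<Longrightarrow> mini (a - int j) (n + j)"
proof (induction j)
  case 0 then show ?case by simp
next
  case (Suc j)
  hence "mini (a - int j - 1) (Suc (n + j))" using mini_left1 by blast
  thus ?case by (simp add: algebra_simps)
qed

lemma mini_mono: "mini a n \<Longrightarrow> a' \<le> a \<Longrightarrow> a + int n \<le> a' + int n' \<Longrightarrow> mini a' n'"
proof -
  assume m: "mini a n" "a' \<le> a" "a + int n \<le> a' + int n'"
  define j where "j = nat (a - a')"
  have aj: "a' = a - int j" using m(2) by (simp add: j_def)
  have "mini a' (n + j)" using mini_left[OF m(1)] aj by simp
  moreover have "n' = (n + j) + (n' - (n + j))" using m(3) aj by simp
  ultimately show ?thesis by (metis mini_right)
qed

end


context ctx begin

definition flat :: "nat \<Rightarrow> (letter list \<Rightarrow> nat set) \<Rightarrow> bool" where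
  "flat n E \<longleftrightarrow> (\<forall>y \<in> F (Suc n). E (tl y) = f (last y) ` E (butlast y))
     \<and> (\<forall>z \<in> F n. E z \<subseteq> {1..d} \<and> card (E z) = k)"

context
  fixes t0 :: int and N :: nat
  assumes mN: "mini t0 N" and rsN: "RS (win \<sigma> t0 N)" and N1: "N \<ge> 1"
begin

definition e :: "nat \<Rightarrow> nat set" where "e j = End (win \<sigma> t0 (N + j))"
definition W :: "nat \<Rightarrow> letter list" where "W j = win \<sigma> (t0 + int j) N"

lemma e_mini: "mini t0 (N + j)"
  using mN mini_right by blast

lemma e_step: "e (Suc j) = f (\<sigma> (t0 + int (N + j))) ` e j"
proof -
  have "win \<sigma> t0 (N + Suc j) = win \<sigma> t0 (N + j) @ [\<sigma> (t0 + int (N + j))]"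
    by (simp add: win_snoc)
  moreover have "card (End (win \<sigma> t0 (N + Suc j))) = card (End (win \<sigma> t0 (N + j)))"
    using e_mini[of j] e_mini[of "Suc j"] unfolding mini_def by simp
  ultimately show ?thesis unfolding e_def by (metis End_snoc_eq)
qed

lemma RS_N: "RS w \<Longrightarrow> length w = N \<Longrightarrow> w = win \<sigma> t0 N"
  using RS_unique rsN by simp

lemma e_u: "W j = win \<sigma> t0 N \<Longrightarrow> e j = End (win \<sigma> t0 N)"
proof -
  assume a: "W j = win \<sigma> t0 N"
  have "win \<sigma> t0 (j + N) = win \<sigma> t0 j @ W j" by (simp add: win_add W_def)
  hence "e j \<subseteq> End (win \<sigma> t0 N)" unfolding e_def using a End_suffix by (metis add.commute)
  moreover have "card (e j) = card (End (win \<sigma> t0 N))"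
    using e_mini[of j] mN unfolding mini_def e_def by simp
  ultimately show ?thesis using End_finite card_subset_eq by blast
qed

lemma W_ext: "W j @ [\<sigma> (t0 + int (N + j))] \<in> F (Suc N)"
  unfolding W_def by (metis win_in_F win_snoc add.commute add.assoc of_nat_add)

lemma W_Suc: "W (Suc j) = tl (W j @ [\<sigma> (t0 + int (N + j))])"
proof -
  have "W j @ [\<sigma> (t0 + int (N + j))] = win \<sigma> (t0 + int j) (Suc N)"
    unfolding W_def by (simp add: win_snoc algebra_simps)
  thus ?thesis unfolding W_def by (simp add: tl_win algebra_simps)
qed

lemma W_next:
  assumes "\<not> RS (W j)" "W j = W j'"
  shows "\<sigma> (t0 + int (N + j)) = \<sigma> (t0 + int (N + j')) \<and> W (Suc j) = W (Suc j')"
proof -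
  have l: "length (W j) = N" by (simp add: W_def)
  have 1: "W j @ [\<sigma> (t0 + int (N + j))] \<in> F (Suc N)" by (rule W_ext)
  have 2: "W j @ [\<sigma> (t0 + int (N + j'))] \<in> F (Suc N)" using W_ext[of j'] assms(2) by simp
  have eq: "\<sigma> (t0 + int (N + j)) = \<sigma> (t0 + int (N + j'))"
  proof (rule ccontr)
    assume "\<not> ?thesis"
    hence "RS (W j)" using 1 2 letter_neq[of "\<sigma> (t0 + int (N + j))" "\<sigma> (t0 + int (N + j'))"]
      unfolding RS_def l by auto
    thus False using assms(1) by simp
  qed
  thus ?thesis using W_Suc[of j] W_Suc[of j'] assms(2) by simp
qed

lemma RS_after: "\<exists>x. RS (W (j + x))"
proof -
  obtain n where n: "n \<ge> N" "RS (win \<sigma> (t0 + int j) n)" using GW by blast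
  have "win \<sigma> (t0 + int j) n = win \<sigma> (t0 + int j) (n - N) @ win \<sigma> (t0 + int j + int (n - N)) N"
    using n(1) win_add[of \<sigma> "t0 + int j" "n - N" N] by simp
  hence "RS (win \<sigma> (t0 + int j + int (n - N)) N)" using n(2) RS_suffix by metis
  thus ?thesis unfolding W_def by (metis add.assoc of_nat_add)
qed

lemma e_welldef:
  assumes eqW: "W j = W j'"
  shows "e j = e j'"
proof -
  define x0 where "x0 = (LEAST x. RS (W (j + x)))"
  have rs0: "RS (W (j + x0))" unfolding x0_def using RS_after by (rule LeastI_ex)
  have nrs: "x < x0 \<Longrightarrow> \<not> RS (W (j + x))" for x unfolding x0_def using not_less_Least by blast
  have fw: "i \<le> x0 \<longrightarrow> W (j + i) = W (j' + i) \<and> (i < x0 \<longrightarrow> \<sigma> (t0 + int (N + (j + i))) = \<sigma> (t0 + int (N + (j' + i))))" for i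
  proof (induction i)
    case 0 then show ?case using eqW nrs[of 0] W_next by simp
  next
    case (Suc i)
    show ?case
    proof
      assume si: "Suc i \<le> x0"
      hence wi: "W (j + i) = W (j' + i)" using Suc by simp
      have "W (Suc (j + i)) = W (Suc (j' + i))" using W_next[OF nrs wi] si by simp
      hence ws: "W (j + Suc i) = W (j' + Suc i)" by simp
      moreover have "Suc i < x0 \<longrightarrow> \<sigma> (t0 + int (N + (j + Suc i))) = \<sigma> (t0 + int (N + (j' + Suc i)))"
        using W_next[OF nrs ws] by blast
      ultimately show "W (j + Suc i) = W (j' + Suc i) \<and> (Suc i < x0 \<longrightarrow> \<sigma> (t0 + int (N + (j + Suc i))) = \<sigma> (t0 + int (N + (j' + Suc i))))" by blast
    qed
  qed
  have top: "e (j + x0) = e (j' + x0)"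
  proof -
    have "W (j + x0) = win \<sigma> t0 N" using rs0 RS_N by (simp add: W_def)
    moreover have "W (j' + x0) = win \<sigma> t0 N" using rs0 RS_N fw[of x0] by (simp add: W_def)
    ultimately show ?thesis using e_u by simp
  qed
  have down: "i \<le> x0 \<longrightarrow> e (j + (x0 - i)) = e (j' + (x0 - i))" for i
  proof (induction i)
    case 0 then show ?case using top by simp
  next
    case (Suc i)
    show ?case
    proof
      assume si: "Suc i \<le> x0"
      define l where "l = x0 - Suc i"
      have ll: "x0 - i = Suc l" using si by (simp add: l_def)
      have "e (Suc (j + l)) = e (Suc (j' + l))" using Suc si ll by simp
      moreover have "\<sigma> (t0 + int (N + (j + l))) = \<sigma> (t0 + int (N + (j' + l)))"
        using fw[of l] si by (simp add: l_def)
      ultimately have "f (\<sigma> (t0 + int (N + (j + l)))) ` e (j + l) = f (\<sigma> (t0 + int (N + (j + l)))) ` e (j' + l)"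
        using e_step by (metis add_Suc_right)
      hence "e (j + l) = e (j' + l)" by (rule f_img_eq)
      thus "e (j + (x0 - Suc i)) = e (j' + (x0 - Suc i))" by (simp add: l_def)
    qed
  qed
  show ?thesis using down[of x0] by simp
qed

definition Efl :: "letter list \<Rightarrow> nat set" where "Efl z = e (SOME j. W j = z)"

lemma Efl_eq: "W j = z \<Longrightarrow> Efl z = e j"
proof -
  assume a: "W j = z"
  have "W (SOME j. W j = z) = z" by (rule someI[of _ j]) (rule a)
  hence "W (SOME j. W j = z) = W j" using a by simp
  hence "e (SOME j. W j = z) = e j" by (rule e_welldef)
  thus ?thesis unfolding Efl_def .
qed

lemma flat_N: "flat N Efl"
  unfolding flat_def
proof (intro conjI ballI)
  fix y assume y: "y \<in> F (Suc N)"
  then obtain j where j: "win \<sigma> (t0 + int j) (Suc N) = y" using recur by blast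
  have b: "butlast y = W j" unfolding j[symmetric] W_def by (rule butlast_win)
  have t: "tl y = W (Suc j)" unfolding j[symmetric] W_def by (simp add: tl_win algebra_simps)
  have l: "last y = \<sigma> (t0 + int (N + j))" unfolding j[symmetric] by (simp add: last_win algebra_simps)
  show "Efl (tl y) = f (last y) ` Efl (butlast y)"
    using Efl_eq[OF b[symmetric]] Efl_eq[OF t[symmetric]] e_step l by simp
next
  fix z assume z: "z \<in> F N"
  then obtain j where j: "W j = z" using recur unfolding W_def by blast
  have "e j \<subseteq> {1..d}" unfolding e_def by (rule End_sub)
  moreover have "card (e j) = k" using e_mini[of j] unfolding mini_def e_def by simp
  ultimately have "Efl z \<subseteq> {1..d} \<and> card (Efl z) = k" using Efl_eq[OF j] by simp
  thus "Efl z \<subseteq> {1..d}" by simp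
next
  fix z assume z: "z \<in> F N"
  then obtain j where j: "W j = z" using recur unfolding W_def by blast
  have "card (e j) = k" using e_mini[of j] unfolding mini_def e_def by simp
  thus "card (Efl z) = k" using Efl_eq[OF j] by simp
qed

end

end


context ctx begin

lemma common_letter:
  assumes z: "z \<in> F n" and l: "L # z \<in> F (Suc n)" and r: "R # z \<in> F (Suc n)"
  shows "\<exists>a. L # z @ [a] \<in> F (Suc (Suc n)) \<and> R # z @ [a] \<in> F (Suc (Suc n))"
proof -
  obtain x where x: "(L # z) @ [x] \<in> F (Suc (Suc n))" using F_ext_right[OF l] by blast
  obtain y where y: "(R # z) @ [y] \<in> F (Suc (Suc n))" using F_ext_right[OF r] by blast
  show ?thesis
  proof (cases "x = y")
    case True then show ?thesis using x y by auto
  next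
    case False
    have lz: "length z = n" using z F_length by blast
    have zx: "z @ [x] \<in> F (Suc n)" using F_tl[OF x] by simp
    have zy: "z @ [y] \<in> F (Suc n)" using F_tl[OF y] by simp
    have "RS z" using zx zy letter_neq[OF False] unfolding RS_def lz by auto
    obtain w where w: "length w = Suc n" "RS w" using RS_exists by blast
    then obtain c w' where cw: "w = c # w'" by (cases w) auto
    have "RS w'" using w(2) cw RS_tl by blast
    moreover have "length w' = n" using w(1) cw by simp
    ultimately have "w' = z" using \<open>RS z\<close> RS_unique lz by simp
    hence cz: "(c # z) @ [L] \<in> F (Suc (Suc n))" "(c # z) @ [R] \<in> F (Suc (Suc n))"
      using w cw unfolding RS_def by auto
    show ?thesis
    proof (cases c)
      case L
      then show ?thesis using cz y by (cases y) auto
    next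
      case R
      then show ?thesis using cz x by (cases x) auto
    qed
  qed
qed

lemma step_down:
  assumes fl: "flat (Suc n) E"
  shows "\<exists>E'. flat n E'"
proof -
  have fl1: "\<And>y. y \<in> F (Suc (Suc n)) \<Longrightarrow> E (tl y) = f (last y) ` E (butlast y)"
    and fl2: "\<And>z. z \<in> F (Suc n) \<Longrightarrow> E z \<subseteq> {1..d} \<and> card (E z) = k"
    using fl unfolding flat_def by auto
  have LR: "E (L # z) = E (R # z)" if z: "z \<in> F n" "L # z \<in> F (Suc n)" "R # z \<in> F (Suc n)" for z
  proof -
    obtain a where a: "L # z @ [a] \<in> F (Suc (Suc n))" "R # z @ [a] \<in> F (Suc (Suc n))"
      using common_letter[OF z] by blast
    have "E (z @ [a]) = f a ` E (L # z)" using fl1[OF a(1)] by (simp add: butlast_append)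
    moreover have "E (z @ [a]) = f a ` E (R # z)" using fl1[OF a(2)] by (simp add: butlast_append)
    ultimately show ?thesis using f_img_eq by metis
  qed
  define E' where "E' z = E ((SOME c. c # z \<in> F (Suc n)) # z)" for z
  have E'_eq: "E' z = E (c # z)" if z: "z \<in> F n" and c: "c # z \<in> F (Suc n)" for z c
  proof -
    define c' where "c' = (SOME c. c # z \<in> F (Suc n))"
    have c': "c' # z \<in> F (Suc n)" unfolding c'_def using c by (rule someI)
    show ?thesis
    proof (cases "c' = c")
      case True then show ?thesis by (simp add: E'_def c'_def)
    next
      case False
      have "E (c' # z) = E (c # z)"
        using letter_neq[OF False] LR[OF z] c c' by auto
      thus ?thesis by (simp add: E'_def c'_def)
    qed
  qed
  have "flat n E'"
    unfolding flat_def
  proof (intro conjI ballI)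
    fix y assume y: "y \<in> F (Suc n)"
    obtain c where c: "c # y \<in> F (Suc (Suc n))" using F_ext_left[OF y] by blast
    have ne: "y \<noteq> []" using y F_length by fastforce
    have bl: "butlast y \<in> F n" using F_butlast[OF y] .
    have tl: "tl y \<in> F n" using F_tl[OF y] .
    have cb: "c # butlast y \<in> F (Suc n)" using F_butlast[OF c] ne by simp
    have hy: "hd y # tl y = y" using ne by simp
    have "E' (tl y) = E (hd y # tl y)" using E'_eq[OF tl, of "hd y"] y hy by simp
    also have "\<dots> = E y" using hy by simp
    also have "\<dots> = f (last y) ` E (c # butlast y)" using fl1[OF c] ne by simp
    also have "\<dots> = f (last y) ` E' (butlast y)" using E'_eq[OF bl cb] by simp
    finally show "E' (tl y) = f (last y) ` E' (butlast y)" .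
  next
    fix z assume z: "z \<in> F n"
    obtain c where c: "c # z \<in> F (Suc n)" using F_ext_left[OF z] by blast
    show "E' z \<subseteq> {1..d}" using E'_eq[OF z c] fl2[OF c] by simp
  next
    fix z assume z: "z \<in> F n"
    obtain c where c: "c # z \<in> F (Suc n)" using F_ext_left[OF z] by blast
    show "card (E' z) = k" using E'_eq[OF z c] fl2[OF c] by simp
  qed
  thus ?thesis by blast
qed

lemma flat_zero: "flat n E \<Longrightarrow> \<exists>E'. flat 0 E'"
proof (induction n arbitrary: E)
  case 0 then show ?case by blast
next
  case (Suc n) then show ?case using step_down by blast
qed

lemma F0: "[] \<in> F 0" using win_in_F[of 0 0] by simp

lemma F1: "[a] \<in> F 1"
proof -
  have sub: "F 1 \<subseteq> {[L], [R]}"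
  proof
    fix w assume "w \<in> F 1"
    hence "length w = 1" using F_length by blast
    then obtain c where "w = [c]" by (metis One_nat_def length_0_conv length_Suc_conv)
    thus "w \<in> {[L], [R]}" by (cases c) auto
  qed
  have "card (F 1) = 2" using F_card by simp
  hence "F 1 = {[L], [R]}" using sub by (metis card_2_iff card_subset_eq finite.emptyI finite.insertI letter.distinct(1) list.inject)
  thus ?thesis by (cases a) auto
qed

lemma invariant_full:
  assumes S: "S \<subseteq> {1..d}" "S \<noteq> {}" and fL: "f L ` S = S" and fR: "f R ` S = S"
  shows "S = {1..d}"
proof -
  have eL: "f L ` S = v ` ((h ^^ M) ` S)" by (auto simp: image_iff)
  have eR: "f R ` S = v ` ((h ^^ M) ` (h ` S))"
    by (auto simp: image_iff funpow_Suc_right simp del: funpow.simps)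
  have "v ` ((h ^^ M) ` S) = v ` ((h ^^ M) ` (h ` S))" using eL eR fL fR by simp
  hence "(h ^^ M) ` S = (h ^^ M) ` (h ` S)" using inj_v by (simp add: inj_image_eq_iff)
  hence hS: "h ` S = S" using inj_fn[OF inj_h] by (simp add: inj_image_eq_iff)
  have hM: "(h ^^ m) ` S = S" for m
  proof (induction m)
    case (Suc m)
    have "(h ^^ Suc m) ` S = h ` ((h ^^ m) ` S)" by (simp add: image_image)
    then show ?case using Suc hS by simp
  qed simp
  have vS: "v ` S = S" using eL fL hM by simp
  have hiS: "inv h ` S = S" using hS image_inv_f_f[OF inj_h, of S] by simp
  have viS: "inv v ` S = S" using vS image_inv_f_f[OF inj_v, of S] by simp
  have gS: "g ` S = S" if "g \<in> gen_perms h v" for g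
    using that
  proof (induction rule: gen_perms.induct)
    case gen_id then show ?case by simp
  next
    case (gen_h g) then show ?case by (metis image_comp hS)
  next
    case (gen_v g) then show ?case by (metis image_comp vS)
  next
    case (gen_hi g) then show ?case by (metis image_comp hiS)
  next
    case (gen_vi g) then show ?case by (metis image_comp viS)
  qed
  obtain a where a: "a \<in> S" using S(2) by blast
  have "b \<in> S" if b: "b \<in> {1..d}" for b
  proof -
    have "a \<in> {1..d}" using a S(1) by blast
    then obtain g where "g \<in> gen_perms h v" "g a = b" using tr b unfolding transitive_on_def by blast
    thus ?thesis using gS a by blast
  qed
  thus ?thesis using S(1) by blast
qed

lemma k_eq_d: "k = d"
proof -
  obtain a0 n0 where a0: "card (End (win \<sigma> a0 n0)) = k" using k_ex by blast
  obtain N where N: "N \<ge> max n0 1" "RS (win \<sigma> a0 N)" using GW by blast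
  have mN: "mini a0 N" using a0 N(1) mini_right[of a0 n0 "N - n0"] unfolding mini_def by simp
  have "flat N (Efl a0 N)" using flat_N[OF mN N(2)] N(1) by simp
  then obtain E where E: "flat 0 E" using flat_zero by blast
  have e1: "E [] = f L ` E []" using E F1[of L] unfolding flat_def by force
  have e2: "E [] = f R ` E []" using E F1[of R] unfolding flat_def by force
  have "E [] \<subseteq> {1..d}" "card (E []) = k" using E F0 unfolding flat_def by auto
  moreover have "E [] \<noteq> {}" using calculation k_pos by auto
  ultimately have "E [] = {1..d}" using invariant_full e1 e2 by simp
  thus ?thesis using \<open>card (E []) = k\<close> by simp
qed

lemma main: "a \<in> {1..d} \<Longrightarrow> \<exists>n. \<mu> n = a \<and> \<sigma> n = s"
proof -
  assume a: "a \<in> {1..d}"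
  obtain a0 n0 where a0: "card (End (win \<sigma> a0 n0)) = k" using k_ex by blast
  obtain j where j: "win \<sigma> (a0 + int n0 + int j) 1 = [s]" using recur F1 by blast
  define n where "n = n0 + j"
  have sq: "\<sigma> (a0 + int n) = s" using j by (simp add: win_def n_def algebra_simps)
  have m: "mini a0 (Suc n)" using a0 mini_right[of a0 n0 "Suc j"] unfolding mini_def n_def by simp
  define y where "y = win \<sigma> a0 n"
  have ys: "win \<sigma> a0 (Suc n) = y @ [s]" using sq by (simp add: y_def win_snoc)
  have cE: "card (End (y @ [s])) = d" using m ys k_eq_d unfolding mini_def by simp
  have "card (End (y @ [s])) = card (Mid y s)"
    unfolding End_snoc by (rule card_image) (meson f_inj inj_on_subset subset_UNIV)
  hence "card (Mid y s) = card {1..d}" using cE by simp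
  hence "Mid y s = {1..d}" using Mid_sub' by (metis card_subset_eq finite_atLeastAtMost)
  hence "a \<in> Mid y s" using a by simp
  then obtain i where i: "win \<sigma> i (Suc (length y)) = y @ [s]" "a = \<mu> (i + int (length y))"
    unfolding Mid_def by blast
  have "\<sigma> (i + int (length y)) = s" using i(1) last_win[of \<sigma> i "length y"] by simp
  thus ?thesis using i(2) by auto
qed

end

theorem lemma5p7:
  fixes d M :: nat and h v :: "nat \<Rightarrow> nat"
    and \<mu> :: "int \<Rightarrow> nat" and \<sigma> :: "int \<Rightarrow> letter"
  assumes "h permutes {1..d}" and "v permutes {1..d}"
    and "transitive_on {1..d} h v"
    and "sturmian \<sigma>"
    and "\<forall>n. \<mu> n \<in> {1..d}"
    and "\<forall>n. \<mu> (n + 1) = act h v M (\<sigma> n) (\<mu> n)"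
  shows "\<forall>a\<in>{1..d}. \<forall>s. \<exists>n. \<mu> n = a \<and> \<sigma> n = s"
proof -
  interpret ctx d M h v \<mu> \<sigma> using assms by unfold_locales
  show ?thesis using main by blast
qed


end
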